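(* Let $\mathbf{C}=\{\mathfrak{F}_k\mid k\ge1\}$ and let $\vDash_{\mathbf{ML}}$ denote $\vDash_{\mathbf{C}}$. Let $p_0$ be a propositional variable not occurring in any $\boldsymbol{bd}_i$. Then $\{\boldsymbol{bd}_i\to p_0\mid i\ge1\}\vDash_{\mathbf{ML}}p_0$, but $\Gamma'\nvDash_{\mathbf{ML}}p_0$ for every finite $\Gamma'\subseteq\{\boldsymbol{bd}_i\to p_0\mid i\ge1\}$. Hence $\vDash_{\mathbf{ML}}$ is not compact.
   Context: Formulas are built from a countably infinite set of propositional variables and $\bot$ using $\land,\lor,\to$; intuitionistic Kripke semantics with valuations assigning upward-closed sets. For $k\ge1$, $\mathfrak{F}_k=\langle\wp^*(k),\supseteq\rangle$, where $k=\{0,\dots,k-1\}$ and $\wp^*(k)$ is the set of non-empty subsets of $k$. For a poset $\mathfrak{P}$, $\Gamma\vDash_{\mathfrak{P}}\varphi$ means: for every valuation $V$ and every point $w$, if all formulas of $\Gamma$ are forced at $w$ then $\varphi$ is forced at $w$; for a class $\mathbf{C}$, $\Gamma\vDash_{\mathbf{C}}\varphi$ means $\Gamma\vDash_{\mathfrak{P}}\varphi$ for all $\mathfrak{P}\in\mathbf{C}$. For $i\ge1$, $\boldsymbol{bd}_i$ is the formula $p_i\lor(p_i\to(p_{i-1}\lor(p_{i-1}\to(\cdots(p_1\lor(p_1\to\bot))\cdots))))$ in the variables $p_1,\dots,p_i$. *)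

theory Defs
  imports Main
begin

datatype form = Var nat | Bot | And form form | Or form form | Imp form form

fun forces :: "'a set \<Rightarrow> ('a \<Rightarrow> 'a \<Rightarrow> bool) \<Rightarrow> (nat \<Rightarrow> 'a set) \<Rightarrow> 'a \<Rightarrow> form \<Rightarrow> bool" where
  "forces W le V w (Var n) = (w \<in> V n)"
| "forces W le V w Bot = False"
| "forces W le V w (And a b) = (forces W le V w a \<and> forces W le V w b)"
| "forces W le V w (Or a b) = (forces W le V w a \<or> forces W le V w b)"
| "forces W le V w (Imp a b) = (\<forall>v\<in>W. le w v \<longrightarrow> forces W le V v a \<longrightarrow> forces W le V v b)"

definition valuation :: "'a set \<Rightarrow> ('a \<Rightarrow> 'a \<Rightarrow> bool) \<Rightarrow> (nat \<Rightarrow> 'a set) \<Rightarrow> bool" where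
  "valuation W le V \<longleftrightarrow> (\<forall>n. V n \<subseteq> W \<and> (\<forall>w\<in>V n. \<forall>v\<in>W. le w v \<longrightarrow> v \<in> V n))"

definition poset_conseq :: "'a set \<Rightarrow> ('a \<Rightarrow> 'a \<Rightarrow> bool) \<Rightarrow> form set \<Rightarrow> form \<Rightarrow> bool" where
  "poset_conseq W le \<Gamma> \<phi> \<longleftrightarrow>
     (\<forall>V. valuation W le V \<longrightarrow> (\<forall>w\<in>W. (\<forall>\<gamma>\<in>\<Gamma>. forces W le V w \<gamma>) \<longrightarrow> forces W le V w \<phi>))"

text \<open>F_k = (nonempty subsets of {0..k-1}, \<supseteq>)\<close>
definition Fk :: "nat \<Rightarrow> nat set set" where
  "Fk k = {s. s \<noteq> {} \<and> s \<subseteq> {..<k}}"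

definition medvedev_conseq :: "form set \<Rightarrow> form \<Rightarrow> bool" where
  "medvedev_conseq \<Gamma> \<phi> \<longleftrightarrow> (\<forall>k\<ge>1. poset_conseq (Fk k) (\<lambda>w v. v \<subseteq> w) \<Gamma> \<phi>)"

text \<open>bd_i with p_j = Var j; bd 0 = Bot is an auxiliary base case, so
  bd 1 = p_1 \<or> (p_1 \<rightarrow> \<bottom>) and bd (i+1) = p_(i+1) \<or> (p_(i+1) \<rightarrow> bd i).\<close>
fun bd :: "nat \<Rightarrow> form" where
  "bd 0 = Bot"
| "bd (Suc i) = Or (Var (Suc i)) (Imp (Var (Suc i)) (bd i))"

definition compact_conseq :: "(form set \<Rightarrow> form \<Rightarrow> bool) \<Rightarrow> bool" where
  "compact_conseq C \<longleftrightarrow> (\<forall>\<Gamma> \<phi>. C \<Gamma> \<phi> \<longrightarrow> (\<exists>\<Gamma>'. finite \<Gamma>' \<and> \<Gamma>' \<subseteq> \<Gamma> \<and> C \<Gamma>' \<phi>))"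

end

theory Submission
  imports Defs
begin

lemma Fk_finite: "w \<in> Fk k \<Longrightarrow> finite w"
  unfolding Fk_def using finite_subset by blast

lemma bd_valid:
  assumes "valuation (Fk k) (\<lambda>w v. v \<subseteq> w) V"
  shows "w \<in> Fk k \<Longrightarrow> card w \<le> i \<Longrightarrow> forces (Fk k) (\<lambda>w v. v \<subseteq> w) V w (bd i)"
proof (induction i arbitrary: w)
  case 0
  then have "finite w" "w \<noteq> {}" using Fk_finite[of w k] by (auto simp: Fk_def)
  then show ?case using 0 by simp
next
  case (Suc i)
  show ?case
  proof (cases "w \<in> V (Suc i)")
    case True then show ?thesis by simp
  next
    case False
    have "forces (Fk k) (\<lambda>w v. v \<subseteq> w) V v (bd i)"
      if v: "v \<in> Fk k" "v \<subseteq> w" "v \<in> V (Suc i)" for v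
    proof -
      have "v \<noteq> w" using v False by auto
      then have "v \<subset> w" using v by auto
      then have "card v < card w" using psubset_card_mono Fk_finite[OF Suc.prems(1)] by blast
      then show ?thesis using Suc.IH[OF v(1)] Suc.prems by simp
    qed
    then show ?thesis by simp
  qed
qed

lemma bd_fail:
  assumes V: "\<And>j. j \<ge> 1 \<Longrightarrow> V j = {v\<in>Fk k. card v \<le> j}"
  shows "w \<in> Fk k \<Longrightarrow> card w > j \<Longrightarrow> \<not> forces (Fk k) (\<lambda>w v. v \<subseteq> w) V w (bd j)"
proof (induction j arbitrary: w)
  case 0 then show ?case by simp
next
  case (Suc j)
  have "w \<notin> V (Suc j)" using V[of "Suc j"] Suc.prems by auto
  moreover obtain v where v: "v \<subseteq> w" "card v = Suc j"
    using obtain_subset_with_card_n[of "Suc j" w] Suc.prems by (metis less_imp_le)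
  moreover have "v \<in> Fk k" using v Suc.prems(1) unfolding Fk_def by auto
  moreover have "v \<in> V (Suc j)" using V[of "Suc j"] v \<open>v \<in> Fk k\<close> by auto
  moreover have "\<not> forces (Fk k) (\<lambda>w v. v \<subseteq> w) V v (bd j)"
    using Suc.IH[OF \<open>v \<in> Fk k\<close>] v by simp
  ultimately show ?case by auto
qed

lemma bound:
  "finite A \<Longrightarrow> A \<subseteq> {Imp (bd i) (Var 0) | i. i \<ge> 1} \<Longrightarrow>
     \<exists>n. \<forall>g\<in>A. \<exists>i. 1 \<le> i \<and> i \<le> n \<and> g = Imp (bd i) (Var 0)"
proof (induction A rule: finite_induct)
  case empty then show ?case by simp
next
  case (insert x F)
  then obtain n where n: "\<forall>g\<in>F. \<exists>i. 1 \<le> i \<and> i \<le> n \<and> g = Imp (bd i) (Var 0)" by auto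
  obtain j where j: "j \<ge> 1" "x = Imp (bd j) (Var 0)" using insert.prems by auto
  show ?case
    apply (rule exI[of _ "max n j"])
    using n j by (metis insert_iff max.cobounded1 max.cobounded2 order_trans)
qed

lemma part1: "medvedev_conseq {Imp (bd i) (Var 0) | i. i \<ge> 1} (Var 0)"
  unfolding medvedev_conseq_def poset_conseq_def
proof (intro allI impI ballI)
  fix k :: nat and V w
  assume k: "1 \<le> k" and val: "valuation (Fk k) (\<lambda>w v. v \<subseteq> w) V" and w: "w \<in> Fk k"
    and G: "\<forall>\<gamma>\<in>{Imp (bd i) (Var 0) |i. 1 \<le> i}. forces (Fk k) (\<lambda>w v. v \<subseteq> w) V w \<gamma>"
  have "card w \<le> k" using w unfolding Fk_def by (metis card_lessThan card_mono finite_lessThan mem_Collect_eq)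
  then have b: "forces (Fk k) (\<lambda>w v. v \<subseteq> w) V w (bd k)" using bd_valid[OF val w] by blast
  have "forces (Fk k) (\<lambda>w v. v \<subseteq> w) V w (Imp (bd k) (Var 0))" using G k by blast
  then show "forces (Fk k) (\<lambda>w v. v \<subseteq> w) V w (Var 0)" using b w by auto
qed

lemma part2:
  assumes "finite G" "G \<subseteq> {Imp (bd i) (Var 0) | i. i \<ge> 1}"
  shows "\<not> medvedev_conseq G (Var 0)"
proof
  assume M: "medvedev_conseq G (Var 0)"
  obtain n where n: "\<forall>g\<in>G. \<exists>i. 1 \<le> i \<and> i \<le> n \<and> g = Imp (bd i) (Var 0)"
    using bound[OF assms] by blast
  define k where "k = Suc n"
  define V where "V = (\<lambda>j. if j = 0 then {v\<in>Fk k. card v \<le> n} else {v\<in>Fk k. card v \<le> j})"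
  have val: "valuation (Fk k) (\<lambda>w v. v \<subseteq> w) V"
    unfolding valuation_def V_def
    by (auto simp: Fk_def) (meson card_mono finite_lessThan finite_subset le_trans)+
  define w where "w = {..<k}"
  have w: "w \<in> Fk k" unfolding w_def k_def Fk_def by auto
  have cw: "card w = Suc n" unfolding w_def k_def by simp
  have "forces (Fk k) (\<lambda>w v. v \<subseteq> w) V w g" if g: "g \<in> G" for g
  proof -
    obtain i where i: "1 \<le> i" "i \<le> n" "g = Imp (bd i) (Var 0)" using n g by blast
    have "v \<in> V 0" if v: "v \<in> Fk k" "v \<subseteq> w" "forces (Fk k) (\<lambda>w v. v \<subseteq> w) V v (bd i)" for v
    proof -
      have "\<not> card v > i"
        using bd_fail[of V k v i] v by (auto simp: V_def)
      then show ?thesis using v i by (auto simp: V_def)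
    qed
    then show ?thesis using i by auto
  qed
  then have "forces (Fk k) (\<lambda>w v. v \<subseteq> w) V w (Var 0)"
    using M val w unfolding medvedev_conseq_def poset_conseq_def k_def by (metis le_add1 plus_1_eq_Suc)
  then show False using cw by (simp add: V_def)
qed

theorem mainTheorem11:
  shows "medvedev_conseq {Imp (bd i) (Var 0) | i. i \<ge> 1} (Var 0)
    \<and> (\<forall>\<Gamma>'. finite \<Gamma>' \<and> \<Gamma>' \<subseteq> {Imp (bd i) (Var 0) | i. i \<ge> 1} \<longrightarrow> \<not> medvedev_conseq \<Gamma>' (Var 0))
    \<and> \<not> compact_conseq medvedev_conseq"
  using part1 part2 unfolding compact_conseq_def by blast

end
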